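(* Let $P:(-\infty,\tfrac12)\to\mathbb{C}\cong\mathbb{R}^2$ be the log-aesthetic curve with shape parameter $\alpha=-1$ and $\Lambda=1$ (a clothoid), $P(\theta)=\int_0^\theta(1-2\psi)^{-1/2}e^{i\psi}\,d\psi$, and let $\delta=\tfrac{2\pi}{3}$. Let $I_\delta$ be its isoptic curve for the angle $\gamma=\pi-\delta=\pi/3$, parametrized for $\theta<\tfrac12-\delta$ by $$I_\delta(\theta)=P(\theta)+\csc(\delta)\Big(V_x(\theta)\sin(\theta+\delta)-V_y(\theta)\cos(\theta+\delta)\Big)(\cos\theta,\sin\theta)^T,$$ where $(V_x(\theta),V_y(\theta))^T$ is the vector $P(\theta+\delta)-P(\theta)$ (i.e. $I_\delta(\theta)$ is the intersection of the tangent lines of $P$ at $P(\theta)$ and $P(\theta+\delta)$). Then the logarithmic curvature graph of $I_\delta$ is not a straight line (its slope is not constant); hence the isoptic is not a log-aesthetic curve, and in particular the clothoid is not autoisoptic. Moreover, the slope of the logarithmic curvature graph of $I_\delta$ (measured between the points with parameters $\theta$ and $\theta-\pi$) tends to $-1$ as $\theta\to-\infty$.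
   Context: For a regular plane curve with radius of curvature $\rho$ and arc length $s$, the logarithmic curvature graph (LCG) is the curve traced by the points $\big(\log\rho,\ \log(\rho\,|ds/d\rho|)\big)$ along the curve. A log-aesthetic curve with shape parameter $\alpha$ is a curve whose LCG is a straight line of slope $\alpha$, i.e. $\log(\rho\, ds/d\rho)=\alpha\log\rho+c$ for a constant $c$. A curve is called autoisoptic if it coincides (up to similarity) with its isoptic curve. The isoptic curve for angle $\gamma\in(0,\pi)$ is the locus of points from which the curve is seen under angle $\gamma$ (intersection points of pairs of tangent lines meeting at angle $\gamma$). *)

theory Defs
  imports "HOL-Analysis.Analysis"
begin

definition oint0 :: "(real \<Rightarrow> complex) \<Rightarrow> real \<Rightarrow> complex" where
  "oint0 f \<theta> = (if 0 \<le> \<theta> then integral {0..\<theta>} f else - integral {\<theta>..0} f)"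

definition clothoidP :: "real \<Rightarrow> complex" where
  "clothoidP \<theta> = oint0 (\<lambda>\<psi>. complex_of_real ((1 - 2*\<psi>) powr (-1/2)) * cis \<psi>) \<theta>"

definition isoDelta :: real where "isoDelta = 2*pi/3"

definition isopticI :: "real \<Rightarrow> complex" where
  "isopticI \<theta> =
     (let V = clothoidP (\<theta> + isoDelta) - clothoidP \<theta> in
      clothoidP \<theta> + complex_of_real ((1 / sin isoDelta) *
          (Re V * sin (\<theta> + isoDelta) - Im V * cos (\<theta> + isoDelta))) * cis \<theta>)"

definition dcurve :: "(real \<Rightarrow> complex) \<Rightarrow> real \<Rightarrow> complex" where
  "dcurve c = (\<lambda>t. vector_derivative c (at t))"

definition speed :: "(real \<Rightarrow> complex) \<Rightarrow> real \<Rightarrow> real" where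
  "speed c t = cmod (dcurve c t)"

definition radius_curv :: "(real \<Rightarrow> complex) \<Rightarrow> real \<Rightarrow> real" where
  "radius_curv c t = speed c t ^ 3 / \<bar>Im (cnj (dcurve c t) * dcurve (dcurve c) t)\<bar>"

(* LCG coordinates: (log rho, log (rho |ds/drho|)), with ds/drho = (ds/dt)/(drho/dt) *)
definition lcg_x :: "(real \<Rightarrow> complex) \<Rightarrow> real \<Rightarrow> real" where
  "lcg_x c t = ln (radius_curv c t)"

definition lcg_y :: "(real \<Rightarrow> complex) \<Rightarrow> real \<Rightarrow> real" where
  "lcg_y c t = ln (radius_curv c t * \<bar>speed c t / deriv (radius_curv c) t\<bar>)"

end

theory Submission
  imports Defs "HOL-Real_Asymp.Real_Asymp"
begin


definition thE :: real where "thE = 1/2 - isoDelta"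

lemma pi_gt3: "pi > 3" using pi_gt3 .

lemma dl_pos: "isoDelta > 2" using pi_gt3 by (simp add: isoDelta_def)
lemma dl_lt: "isoDelta < 3" using pi_less_4 by (simp add: isoDelta_def)

lemma sin_dl: "sin isoDelta = sqrt 3 / 2"
proof -
  have "isoDelta = pi - pi/3" by (simp add: isoDelta_def)
  then have "sin isoDelta = sin (pi - pi/3)" by (simp only:)
  also have "\<dots> = sin (pi/3)" by (rule sin_pi_minus)
  finally show ?thesis by (simp add: sin_60)
qed

lemma cos_dl: "cos isoDelta = -1/2"
proof -
  have "isoDelta = pi - pi/3" by (simp add: isoDelta_def)
  then have "cos isoDelta = cos (pi - pi/3)" by (simp only:)
  also have "\<dots> = - cos (pi/3)" by (rule cos_pi_minus)
  finally show ?thesis by (simp add: cos_60)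
qed

lemma sin_dl_pos: "sin isoDelta > 0" by (simp add: sin_dl)

lemma hvd_cis [derivative_intros]:
  assumes "(f has_real_derivative f') (at x within A)"
  shows "((\<lambda>x. cis (f x)) has_vector_derivative (\<i> * cis (f x) * of_real f')) (at x within A)"
proof -
  have "(f has_derivative (\<lambda>t. f' * t)) (at x within A)"
    using assms by (simp add: has_field_derivative_def)
  from has_derivative_cis[OF this] show ?thesis
    by (simp add: has_vector_derivative_def scaleR_conv_of_real algebra_simps)
qed

definition rho :: "real \<Rightarrow> real" where "rho \<theta> = (1 - 2*\<theta>) powr (-1/2)"

lemma rho_pos: "\<theta> < 1/2 \<Longrightarrow> rho \<theta> > 0" by (simp add: rho_def)

lemma rho_deriv:
  assumes "\<theta> < 1/2"
  shows "(rho has_real_derivative rho \<theta> / (1 - 2*\<theta>)) (at \<theta>)"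
proof -
  have "((\<lambda>\<theta>. (1 - 2*\<theta>) powr (-1/2)) has_real_derivative
     (-1/2) * (1 - 2*\<theta>) powr (-1/2 - 1) * (0 - 2*1)) (at \<theta>)"
    using assms by (intro derivative_eq_intros) auto
  moreover have "(-1/2) * (1 - 2*\<theta>) powr (-1/2 - 1) * (0 - 2*1) = rho \<theta> / (1 - 2*\<theta>)"
  proof -
    have "(1 - 2*\<theta>) powr (-1/2) = (1 - 2*\<theta>) powr (-3/2 + 1)" by simp
    also have "\<dots> = (1 - 2*\<theta>) powr (-3/2) * (1 - 2*\<theta>) powr 1" by (rule powr_add)
    also have "\<dots> = (1 - 2*\<theta>) powr (-3/2) * (1 - 2*\<theta>)" using assms by simp
    finally show ?thesis using assms by (simp add: rho_def)
  qed
  ultimately show ?thesis by (simp add: rho_def [abs_def])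
qed

fun ck :: "nat \<Rightarrow> real" where
  "ck 0 = 1" | "ck (Suc k) = (2 * real k + 1) * ck k"

lemma ck_pos: "ck k > 0" by (induction k) auto

definition rk :: "nat \<Rightarrow> real \<Rightarrow> real" where
  "rk k \<theta> = ck k * rho \<theta> / (1 - 2*\<theta>)^k"

lemma rk0: "rk 0 \<theta> = rho \<theta>" by (simp add: rk_def)

lemma rk_pos: "\<theta> < 1/2 \<Longrightarrow> rk k \<theta> > 0"
  by (simp add: rk_def rho_pos ck_pos)

lemma rk_deriv:
  assumes "\<theta> < 1/2"
  shows "(rk k has_real_derivative rk (Suc k) \<theta>) (at \<theta>)"
proof -
  have ne: "1 - 2*\<theta> \<noteq> 0" using assms by simp
  have "((\<lambda>\<theta>. ck k * rho \<theta> / (1 - 2*\<theta>)^k) has_real_derivative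
     (ck k * (rho \<theta> / (1 - 2*\<theta>)) * (1 - 2*\<theta>)^k - ck k * rho \<theta> * (real k * (1 - 2*\<theta>)^(k-1) * (0 - 2*1))) / ((1 - 2*\<theta>)^k * (1 - 2*\<theta>)^k)) (at \<theta>)"
    using assms ne rho_deriv[OF assms]
    by (auto intro!: derivative_eq_intros)
  moreover have "(ck k * (rho \<theta> / (1 - 2*\<theta>)) * (1 - 2*\<theta>)^k - ck k * rho \<theta> * (real k * (1 - 2*\<theta>)^(k-1) * (0 - 2*1))) / ((1 - 2*\<theta>)^k * (1 - 2*\<theta>)^k) = rk (Suc k) \<theta>"
  proof (cases k)
    case 0 then show ?thesis using ne by (simp add: rk_def)
  next
    case (Suc m)
    define u where "u = 1 - 2*\<theta>"
    have u: "u \<noteq> 0" using ne u_def by simp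
    have "(ck k * (rho \<theta> / u) * u^k - ck k * rho \<theta> * (real k * u^(k-1) * (0 - 2*1))) / (u^k * u^k)
        = ck k * rho \<theta> * u^m * (1 + 2 * real k) / (u^m * u * (u^m * u))"
      using Suc u by (simp add: algebra_simps)
    also have "\<dots> = ck k * rho \<theta> * (1 + 2 * real k) / (u^m * u * u)"
      using u by (simp add: ac_simps)
    also have "\<dots> = rk (Suc k) \<theta>" using Suc u by (simp add: rk_def u_def algebra_simps)
    finally show ?thesis by (simp add: u_def)
  qed
  ultimately show ?thesis by (simp add: rk_def [abs_def])
qed

lemma rk_cont [continuous_intros]: "b < 1/2 \<Longrightarrow> continuous_on {a..b} (rk k)"
  by (intro continuous_at_imp_continuous_on ballI DERIV_isCont[OF rk_deriv]) auto


definition pint :: "real \<Rightarrow> complex" where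
  "pint \<psi> = complex_of_real ((1 - 2*\<psi>) powr (-1/2)) * cis \<psi>"

lemma pint_eq: "pint \<psi> = of_real (rk 0 \<psi>) * cis \<psi>"
  by (simp add: pint_def rk0 rho_def)

lemma clothoidP_def': "clothoidP = oint0 pint"
  by (simp add: clothoidP_def [abs_def] pint_def [abs_def])

lemma pint_cont: "b < 1/2 \<Longrightarrow> continuous_on {a..b} pint"
  unfolding pint_eq [abs_def] by (intro continuous_intros rk_cont)

lemma oint0_eq:
  assumes c: "continuous_on {a..b} f" and "a \<le> 0" "a \<le> \<theta>" "0 \<le> b" "\<theta> \<le> b"
  shows "oint0 f \<theta> = integral {a..\<theta>} f - integral {a..0} f"
proof (cases "0 \<le> \<theta>")
  case True
  have "integral {a..0} f + integral {0..\<theta>} f = integral {a..\<theta>} f"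
    by (rule Henstock_Kurzweil_Integration.integral_combine)
       (use assms True in \<open>auto intro!: integrable_continuous_interval continuous_on_subset[OF c]\<close>)
  then show ?thesis using True by (simp add: oint0_def algebra_simps)
next
  case False
  have "integral {a..\<theta>} f + integral {\<theta>..0} f = integral {a..0} f"
    by (rule Henstock_Kurzweil_Integration.integral_combine)
       (use assms False in \<open>auto intro!: integrable_continuous_interval continuous_on_subset[OF c]\<close>)
  then show ?thesis using False by (simp add: oint0_def algebra_simps)
qed

lemma P_deriv:
  assumes "\<theta> < 1/2"
  shows "(clothoidP has_vector_derivative pint \<theta>) (at \<theta>)"
proof -
  define a where "a = min 0 \<theta> - 1"
  define b where "b = (max 0 \<theta> + 1/2)/2"
  have ab: "a < \<theta>" "\<theta> < b" "a \<le> 0" "0 \<le> b" "b < 1/2" using assms by (auto simp: a_def b_def)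
  have c: "continuous_on {a..b} pint" using ab by (intro pint_cont)
  have d: "((\<lambda>u. integral {a..u} pint - integral {a..0} pint) has_vector_derivative pint \<theta>) (at \<theta>)"
  proof -
    have "((\<lambda>u. integral {a..u} pint) has_vector_derivative pint \<theta>) (at \<theta> within {a..b})"
      using c ab by (intro integral_has_vector_derivative) auto
    then have "((\<lambda>u. integral {a..u} pint) has_vector_derivative pint \<theta>) (at \<theta>)"
      using ab by (simp add: at_within_Icc_at)
    then show ?thesis by (simp add: has_vector_derivative_diff_const)
  qed
  show ?thesis
  proof (rule has_vector_derivative_transform_within_open[OF d, of "{a<..<b}"])
    fix y assume "y \<in> {a<..<b}"
    then show "integral {a..y} pint - integral {a..0} pint = clothoidP y"
      using ab by (subst clothoidP_def', subst oint0_eq[OF c]) auto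
  qed (use ab in auto)
qed

lemma P_diff:
  assumes "\<theta> \<le> \<theta>'" "\<theta>' < 1/2"
  shows "clothoidP \<theta>' - clothoidP \<theta> = integral {\<theta>..\<theta>'} pint"
proof -
  define a where "a = min 0 \<theta> - 1"
  define b where "b = (max 0 \<theta>' + 1/2)/2"
  have ab: "a < \<theta>" "\<theta>' < b" "a \<le> 0" "0 \<le> b" "b < 1/2" using assms by (auto simp: a_def b_def)
  have c: "continuous_on {a..b} pint" using ab by (intro pint_cont)
  have "integral {a..\<theta>} pint + integral {\<theta>..\<theta>'} pint = integral {a..\<theta>'} pint"
    by (rule Henstock_Kurzweil_Integration.integral_combine)
       (use ab assms in \<open>auto intro!: integrable_continuous_interval continuous_on_subset[OF c]\<close>)
  moreover have "clothoidP \<theta>' = integral {a..\<theta>'} pint - integral {a..0} pint"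
    using ab assms by (subst clothoidP_def', subst oint0_eq[OF c]) auto
  moreover have "clothoidP \<theta> = integral {a..\<theta>} pint - integral {a..0} pint"
    using ab assms by (subst clothoidP_def', subst oint0_eq[OF c]) auto
  ultimately show ?thesis by (metis add_diff_cancel_left' diff_diff_eq2 diff_add_cancel)
qed

section \<open>The isoptic and its derivative\<close>

definition F0 :: "real \<Rightarrow> complex" where
  "F0 \<theta> = cnj (clothoidP (\<theta> + isoDelta) - clothoidP \<theta>) * cis (\<theta> + isoDelta)"

lemma Im_cnj_cis: "Im (cnj V * cis \<phi>) = Re V * sin \<phi> - Im V * cos \<phi>"
  by simp

lemma isopticI_eq: "isopticI \<theta> = clothoidP \<theta> + of_real (Im (F0 \<theta>) / sin isoDelta) * cis \<theta>"
  unfolding isopticI_def Let_def F0_def Im_cnj_cis by simp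

lemma thE_lt: "\<theta> < thE \<Longrightarrow> \<theta> + isoDelta < 1/2 \<and> \<theta> < 1/2"
  using dl_pos by (auto simp: thE_def)

lemma F0_deriv:
  assumes "\<theta> < thE"
  shows "(F0 has_vector_derivative
     (\<i> * F0 \<theta> + of_real (rk 0 (\<theta>+isoDelta)) - of_real (rk 0 \<theta>) * cis isoDelta)) (at \<theta>)"
proof -
  have h: "\<theta> + isoDelta < 1/2" "\<theta> < 1/2" using thE_lt[OF assms] by auto
  have sh: "((\<lambda>\<theta>. \<theta> + isoDelta) has_vector_derivative 1) (at \<theta>)"
    by (auto intro!: derivative_eq_intros)
  have d1: "((\<lambda>\<theta>. clothoidP (\<theta> + isoDelta)) has_vector_derivative pint (\<theta>+isoDelta)) (at \<theta>)"
    using vector_diff_chain_at[OF sh P_deriv[OF h(1)]] by (simp add: o_def)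
  have "(F0 has_vector_derivative
     (cnj (clothoidP (\<theta> + isoDelta) - clothoidP \<theta>) * (\<i> * cis (\<theta> + isoDelta) * of_real 1)
      + cnj (pint (\<theta>+isoDelta) - pint \<theta>) * cis (\<theta> + isoDelta))) (at \<theta>)"
    unfolding F0_def [abs_def]
    by (intro has_vector_derivative_mult has_vector_derivative_cnj has_vector_derivative_diff
          d1 P_deriv h hvd_cis) (auto intro!: derivative_eq_intros)
  moreover have "cnj (clothoidP (\<theta> + isoDelta) - clothoidP \<theta>) * (\<i> * cis (\<theta> + isoDelta) * of_real 1)
      + cnj (pint (\<theta>+isoDelta) - pint \<theta>) * cis (\<theta> + isoDelta)
      = \<i> * F0 \<theta> + of_real (rk 0 (\<theta>+isoDelta)) - of_real (rk 0 \<theta>) * cis isoDelta"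
  proof -
    have e1: "cnj (pint x) * cis y = of_real (rk 0 x) * cis (y - x)" for x y
      by (simp add: pint_eq cis_cnj mult.assoc cis_mult)
    have "cnj (pint (\<theta>+isoDelta) - pint \<theta>) * cis (\<theta> + isoDelta)
        = of_real (rk 0 (\<theta>+isoDelta)) - of_real (rk 0 \<theta>) * cis isoDelta"
      by (simp only: complex_cnj_diff left_diff_distrib e1) simp
    then show ?thesis by (simp add: F0_def algebra_simps)
  qed
  ultimately show ?thesis by simp
qed



section \<open>The auxiliary integrals G k\<close>

definition gk :: "nat \<Rightarrow> real \<Rightarrow> real \<Rightarrow> complex" where
  "gk k \<theta> \<psi> = of_real (rk k \<psi>) * cis (\<theta> + isoDelta - \<psi>)"

definition G :: "nat \<Rightarrow> real \<Rightarrow> complex" where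
  "G k \<theta> = integral {\<theta>..\<theta>+isoDelta} (gk k \<theta>)"

definition aa :: complex where "aa = \<i> - \<i> * cis isoDelta"

lemma gk_cont: "\<theta> < thE \<Longrightarrow> continuous_on {\<theta>..\<theta>+isoDelta} (gk k \<theta>)"
  unfolding gk_def [abs_def] using thE_lt[of \<theta>] by (intro continuous_intros rk_cont) auto

lemma gk_has_int: "\<theta> < thE \<Longrightarrow> (gk k \<theta> has_integral G k \<theta>) {\<theta>..\<theta>+isoDelta}"
  unfolding G_def by (intro integrable_integral integrable_continuous_interval gk_cont)

lemma F0_G: assumes "\<theta> < thE" shows "F0 \<theta> = G 0 \<theta>"
proof -
  have h: "\<theta> \<le> \<theta> + isoDelta" "\<theta> + isoDelta < 1/2" using thE_lt[OF assms] dl_pos by auto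
  have e1: "cnj (pint x) * cis y = of_real (rk 0 x) * cis (y - x)" for x y
    by (simp add: pint_eq cis_cnj mult.assoc cis_mult)
  have "F0 \<theta> = integral {\<theta>..\<theta>+isoDelta} (\<lambda>x. cnj (pint x)) * cis (\<theta> + isoDelta)"
    by (simp add: F0_def P_diff[OF h] integral_cnj)
  also have "\<dots> = integral {\<theta>..\<theta>+isoDelta} (\<lambda>x. cnj (pint x) * cis (\<theta> + isoDelta))"
    by (simp add: integral_mult_left)
  also have "\<dots> = G 0 \<theta>" unfolding G_def gk_def e1 by simp
  finally show ?thesis .
qed

lemma G_rec:
  assumes "\<theta> < thE"
  shows "G (Suc k) \<theta> = \<i> * G k \<theta> + of_real (rk k (\<theta>+isoDelta)) - of_real (rk k \<theta>) * cis isoDelta"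
proof -
  have h: "\<theta> \<le> \<theta> + isoDelta" "\<theta> + isoDelta < 1/2" using thE_lt[OF assms] dl_pos by auto
  define \<Phi> where "\<Phi> = (\<lambda>\<psi>. \<i> * of_real (rk k \<psi>) * cis (\<theta> + isoDelta - \<psi>))"
  have ftc: "((\<lambda>\<psi>. gk k \<theta> \<psi> + \<i> * gk (Suc k) \<theta> \<psi>) has_integral (\<Phi> (\<theta>+isoDelta) - \<Phi> \<theta>)) {\<theta>..\<theta>+isoDelta}"
  proof (rule fundamental_theorem_of_calculus)
    fix x assume x: "x \<in> {\<theta>..\<theta>+isoDelta}"
    then have x2: "x < 1/2" using h by auto
    have "(\<Phi> has_vector_derivative
       \<i> * of_real (rk k x) * (\<i> * cis (\<theta> + isoDelta - x) * of_real (0 - 1))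
       + \<i> * of_real (rk (Suc k) x) * cis (\<theta> + isoDelta - x)) (at x)"
      unfolding \<Phi>_def
      by (intro has_vector_derivative_mult has_vector_derivative_mult_right has_vector_derivative_of_real
            rk_deriv x2 hvd_cis derivative_intros)
    moreover have "\<i> * of_real (rk k x) * (\<i> * cis (\<theta> + isoDelta - x) * of_real (0 - 1))
       + \<i> * of_real (rk (Suc k) x) * cis (\<theta> + isoDelta - x) = gk k \<theta> x + \<i> * gk (Suc k) \<theta> x"
      by (simp add: gk_def algebra_simps)
    ultimately show "(\<Phi> has_vector_derivative gk k \<theta> x + \<i> * gk (Suc k) \<theta> x) (at x within {\<theta>..\<theta> + isoDelta})"
      by (simp add: has_vector_derivative_at_within)
  qed (use h in auto)
  have "((\<lambda>\<psi>. gk k \<theta> \<psi> + \<i> * gk (Suc k) \<theta> \<psi>) has_integral (G k \<theta> + \<i> * G (Suc k) \<theta>)) {\<theta>..\<theta>+isoDelta}"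
    by (intro has_integral_add has_integral_mult_right gk_has_int assms)
  with ftc have "G k \<theta> + \<i> * G (Suc k) \<theta> = \<Phi> (\<theta>+isoDelta) - \<Phi> \<theta>"
    using has_integral_unique by blast
  then have "\<i> * G (Suc k) \<theta> = \<Phi> (\<theta>+isoDelta) - \<Phi> \<theta> - G k \<theta>" by (simp add: algebra_simps)
  then have "G (Suc k) \<theta> = - \<i> * (\<Phi> (\<theta>+isoDelta) - \<Phi> \<theta> - G k \<theta>)"
  proof -
    have "G (Suc k) \<theta> = - \<i> * (\<i> * G (Suc k) \<theta>)" by (simp add: mult.assoc[symmetric])
    then show ?thesis using \<open>\<i> * G (Suc k) \<theta> = _\<close> by simp
  qed
  then show ?thesis by (simp add: \<Phi>_def algebra_simps)
qed

lemma G_deriv: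
  assumes "\<theta> < thE"
  shows "(G k has_vector_derivative G (Suc k) \<theta>) (at \<theta>)"
  using assms
proof (induction k arbitrary: \<theta>)
  case 0
  have "(F0 has_vector_derivative G (Suc 0) \<theta>) (at \<theta>)"
    using F0_deriv[OF 0] by (simp add: G_rec[OF 0] F0_G[OF 0])
  then show ?case
    by (rule has_vector_derivative_transform_within_open[of _ _ _ "{..<thE}"]) (use 0 F0_G in auto)
next
  case (Suc k)
  have h: "\<theta> + isoDelta < 1/2" "\<theta> < 1/2" using thE_lt[OF Suc.prems] by auto
  have d2: "((\<lambda>x. rk k (x + isoDelta)) has_real_derivative rk (Suc k) (\<theta> + isoDelta) * 1) (at \<theta>)"
    by (rule DERIV_chain2[where f="rk k" and g="\<lambda>x. x + isoDelta", OF rk_deriv[OF h(1)]]) (auto intro!: derivative_eq_intros)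
  have "((\<lambda>\<theta>. \<i> * G k \<theta> + of_real (rk k (\<theta>+isoDelta)) - of_real (rk k \<theta>) * cis isoDelta)
     has_vector_derivative (\<i> * G (Suc k) \<theta> + of_real (rk (Suc k) (\<theta> + isoDelta) * 1) - of_real (rk (Suc k) \<theta>) * cis isoDelta)) (at \<theta>)"
    by (intro has_vector_derivative_diff has_vector_derivative_add has_vector_derivative_mult_right
         has_vector_derivative_mult_left has_vector_derivative_of_real Suc.IH Suc.prems d2 rk_deriv h)
  then have "((\<lambda>\<theta>. \<i> * G k \<theta> + of_real (rk k (\<theta>+isoDelta)) - of_real (rk k \<theta>) * cis isoDelta)
     has_vector_derivative G (Suc (Suc k)) \<theta>) (at \<theta>)"
    by (simp add: G_rec[OF Suc.prems])
  then show ?case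
    by (rule has_vector_derivative_transform_within_open[of _ _ _ "{..<thE}"]) (use Suc.prems G_rec in auto)
qed

lemma rk_mono:
  assumes "x \<le> y" "y < 1/2"
  shows "rk k x \<le> rk k y"
  by (rule DERIV_nonneg_imp_nondecreasing[OF assms(1)])
     (use assms rk_pos in \<open>auto intro!: exI rk_deriv less_imp_le\<close>)

lemma int_cis: "((\<lambda>\<psi>. cis (\<theta> + isoDelta - \<psi>)) has_integral aa) {\<theta>..\<theta>+isoDelta}"
proof -
  have "((\<lambda>\<psi>. cis (\<theta> + isoDelta - \<psi>)) has_integral
     ((\<lambda>\<psi>. \<i> * cis (\<theta> + isoDelta - \<psi>)) (\<theta>+isoDelta) - (\<lambda>\<psi>. \<i> * cis (\<theta> + isoDelta - \<psi>)) \<theta>)) {\<theta>..\<theta>+isoDelta}"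
  proof (rule fundamental_theorem_of_calculus)
    fix x :: real
    have "((\<lambda>\<psi>. \<i> * cis (\<theta> + isoDelta - \<psi>)) has_vector_derivative \<i> * (\<i> * cis (\<theta> + isoDelta - x) * of_real (0 - 1))) (at x)"
      by (intro has_vector_derivative_mult_right hvd_cis derivative_intros)
    then show "((\<lambda>\<psi>. \<i> * cis (\<theta> + isoDelta - \<psi>)) has_vector_derivative cis (\<theta> + isoDelta - x)) (at x within {\<theta>..\<theta> + isoDelta})"
      by (simp add: has_vector_derivative_at_within)
  qed (use dl_pos in auto)
  then show ?thesis by (simp add: aa_def)
qed

lemma G_bound:
  assumes "\<theta> < thE"
  shows "norm (G k \<theta> - of_real (rk k \<theta>) * aa) \<le> isoDelta * (rk k (\<theta>+isoDelta) - rk k \<theta>)"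
proof -
  have h: "\<theta> \<le> \<theta> + isoDelta" "\<theta> + isoDelta < 1/2" using thE_lt[OF assms] dl_pos by auto
  have i: "((\<lambda>\<psi>. gk k \<theta> \<psi> - of_real (rk k \<theta>) * cis (\<theta> + isoDelta - \<psi>)) has_integral (G k \<theta> - of_real (rk k \<theta>) * aa)) {\<theta>..\<theta>+isoDelta}"
    by (intro has_integral_diff has_integral_mult_right gk_has_int int_cis assms)
  have "norm (G k \<theta> - of_real (rk k \<theta>) * aa) \<le> (rk k (\<theta>+isoDelta) - rk k \<theta>) * Henstock_Kurzweil_Integration.content {\<theta>..\<theta>+isoDelta}"
  proof (rule has_integral_bound_real[OF _ _ i])
    show "0 \<le> rk k (\<theta> + isoDelta) - rk k \<theta>" using rk_mono[OF h] by simp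
    fix x assume "x \<in> {\<theta>..\<theta> + isoDelta} - {}"
    then have x: "\<theta> \<le> x" "x \<le> \<theta> + isoDelta" by auto
    have m1: "rk k \<theta> \<le> rk k x" using rk_mono[of \<theta> x k] x h by auto
    have m2: "rk k x \<le> rk k (\<theta> + isoDelta)" using rk_mono[of x "\<theta>+isoDelta" k] x h by auto
    have "gk k \<theta> x - of_real (rk k \<theta>) * cis (\<theta> + isoDelta - x) = of_real (rk k x - rk k \<theta>) * cis (\<theta> + isoDelta - x)"
      by (simp add: gk_def algebra_simps)
    then have "norm (gk k \<theta> x - of_real (rk k \<theta>) * cis (\<theta> + isoDelta - x)) = rk k x - rk k \<theta>"
      using m1 by (simp add: norm_mult del: of_real_diff flip: of_real_diff)
    then show "norm (gk k \<theta> x - of_real (rk k \<theta>) * cis (\<theta> + isoDelta - x)) \<le> rk k (\<theta> + isoDelta) - rk k \<theta>"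
      using m2 by simp
  qed auto
  then show ?thesis using dl_pos by (simp add: mult.commute)
qed



section \<open>Limits of the normalised integrals\<close>

lemma rk_ratio:
  assumes "\<theta> < thE"
  shows "rk k (\<theta>+isoDelta) / rk k \<theta> = (rho (\<theta>+isoDelta) / rho \<theta>) * ((1-2*\<theta>) / (1-2*(\<theta>+isoDelta)))^k"
proof -
  have h: "\<theta> + isoDelta < 1/2" "\<theta> < 1/2" using thE_lt[OF assms] by auto
  then have "rho \<theta> > 0" "ck k > 0" "1 - 2*\<theta> > 0" "1-2*(\<theta>+isoDelta) > 0" using rho_pos ck_pos by auto
  then show ?thesis by (simp add: rk_def power_divide field_simps)
qed

lemma f_lim: "((\<lambda>\<theta>. G k \<theta> / of_real (rk k \<theta>)) \<longlongrightarrow> aa) at_bot"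
proof -
  have ev: "eventually (\<lambda>\<theta>. \<theta> < thE) at_bot"
    by (rule eventually_at_bot_linorderI[of "thE - 1"]) auto
  have r1: "((\<lambda>\<theta>. rho (\<theta>+isoDelta) / rho \<theta>) \<longlongrightarrow> 1) at_bot"
    unfolding rho_def by real_asymp
  have r2: "((\<lambda>\<theta>. (1-2*\<theta>) / (1-2*(\<theta>+isoDelta))) \<longlongrightarrow> 1) at_bot"
    by real_asymp
  have "((\<lambda>\<theta>. isoDelta * ((rho (\<theta>+isoDelta) / rho \<theta>) * ((1-2*\<theta>) / (1-2*(\<theta>+isoDelta)))^k - 1))
        \<longlongrightarrow> isoDelta * (1 * 1^k - 1)) at_bot"
    by (intro tendsto_intros r1 r2)
  then have "((\<lambda>\<theta>. isoDelta * ((rho (\<theta>+isoDelta) / rho \<theta>) * ((1-2*\<theta>) / (1-2*(\<theta>+isoDelta)))^k - 1))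
        \<longlongrightarrow> 0) at_bot" by simp
  then have lim0: "((\<lambda>\<theta>. isoDelta * (rk k (\<theta>+isoDelta) / rk k \<theta> - 1)) \<longlongrightarrow> 0) at_bot"
    by (rule Lim_transform_eventually) (use ev in \<open>auto elim!: eventually_mono simp only: rk_ratio\<close>)
  have "((\<lambda>\<theta>. G k \<theta> / of_real (rk k \<theta>) - aa) \<longlongrightarrow> 0) at_bot"
  proof (rule Lim_null_comparison[OF _ lim0])
    show "\<forall>\<^sub>F x in at_bot. norm (G k x / of_real (rk k x) - aa) \<le> isoDelta * (rk k (x + isoDelta) / rk k x - 1)"
      using ev
    proof (rule eventually_mono)
      fix x assume x: "x < thE"
      then have pos: "rk k x > 0" using thE_lt rk_pos by auto
      have "G k x / of_real (rk k x) - aa = (G k x - of_real (rk k x) * aa) / of_real (rk k x)"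
        using pos by (simp add: field_simps)
      then have "norm (G k x / of_real (rk k x) - aa) = norm (G k x - of_real (rk k x) * aa) / rk k x"
        using pos by (simp add: norm_divide)
      also have "\<dots> \<le> isoDelta * (rk k (x+isoDelta) - rk k x) / rk k x"
        using G_bound[OF x, of k] pos by (simp add: divide_right_mono)
      also have "\<dots> = isoDelta * (rk k (x + isoDelta) / rk k x - 1)"
        using pos by (simp add: field_simps)
      finally show "norm (G k x / of_real (rk k x) - aa) \<le> isoDelta * (rk k (x + isoDelta) / rk k x - 1)" .
    qed
  qed
  from tendsto_add[OF this tendsto_const[of aa]] show ?thesis by simp
qed

lemma aa_eq: "aa = of_real (sqrt 3 / 2) + \<i> * 3/2"
  by (simp add: aa_def cis.ctr sin_dl cos_dl complex_eq_iff)

lemma cnj_aa_aa: "cnj aa * aa = 3"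
  by (simp add: aa_eq complex_eq_iff power2_eq_square)



definition D :: "real \<Rightarrow> complex" where "D \<theta> = cis \<theta> * G 0 \<theta> / of_real (sin isoDelta)"
definition D1 :: "real \<Rightarrow> complex" where
  "D1 \<theta> = cis \<theta> * (\<i> * G 0 \<theta> + G 1 \<theta>) / of_real (sin isoDelta)"

lemma Re_deriv: "(f has_vector_derivative f') (at x) \<Longrightarrow> ((\<lambda>x. Re (f x)) has_real_derivative Re f') (at x)"
  by (simp add: has_vector_derivative_complex_iff)
lemma Im_deriv: "(f has_vector_derivative f') (at x) \<Longrightarrow> ((\<lambda>x. Im (f x)) has_real_derivative Im f') (at x)"
  by (simp add: has_vector_derivative_complex_iff)

lemma I_deriv:
  assumes "\<theta> < thE"
  shows "(isopticI has_vector_derivative D \<theta>) (at \<theta>)"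
proof -
  have h: "\<theta> < 1/2" using thE_lt[OF assms] by auto
  have s: "sin isoDelta \<noteq> 0" using sin_dl_pos by simp
  define F' where "F' = \<i> * F0 \<theta> + of_real (rk 0 (\<theta>+isoDelta)) - of_real (rk 0 \<theta>) * cis isoDelta"
  have dIm: "((\<lambda>\<theta>. Im (F0 \<theta>) / sin isoDelta) has_real_derivative Im F' / sin isoDelta) (at \<theta>)"
    by (rule DERIV_cdivide, rule Im_deriv) (use F0_deriv[OF assms] in \<open>simp add: F'_def\<close>)
  have eqI: "isopticI = (\<lambda>\<theta>. clothoidP \<theta> + of_real (Im (F0 \<theta>) / sin isoDelta) * cis \<theta>)"
    by (rule ext) (rule isopticI_eq)
  have "(isopticI has_vector_derivative (pint \<theta> + (of_real (Im (F0 \<theta>) / sin isoDelta) * (\<i> * cis \<theta> * of_real 1)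
          + of_real (Im F' / sin isoDelta) * cis \<theta>))) (at \<theta>)"
    unfolding eqI
    by (intro has_vector_derivative_add has_vector_derivative_mult has_vector_derivative_of_real
        P_deriv h dIm hvd_cis DERIV_ident)
  moreover have "pint \<theta> + (of_real (Im (F0 \<theta>) / sin isoDelta) * (\<i> * cis \<theta> * of_real 1)
          + of_real (Im F' / sin isoDelta) * cis \<theta>) = D \<theta>"
  proof -
    have e: "Im F' = Re (F0 \<theta>) - rk 0 \<theta> * sin isoDelta" by (simp add: F'_def)
    show ?thesis unfolding e D_def F0_G[OF assms, symmetric] pint_eq
      using s by (simp add: complex_eq_iff field_simps)
  qed
  ultimately show ?thesis by simp
qed

lemma D_deriv:
  assumes "\<theta> < thE"
  shows "(D has_vector_derivative D1 \<theta>) (at \<theta>)"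
proof -
  have "(D has_vector_derivative (cis \<theta> * G (Suc 0) \<theta> + \<i> * cis \<theta> * of_real 1 * G 0 \<theta>) / of_real (sin isoDelta)) (at \<theta>)"
    unfolding D_def [abs_def]
    by (intro has_vector_derivative_divide has_vector_derivative_mult G_deriv assms hvd_cis DERIV_ident)
  then show ?thesis by (simp add: D1_def algebra_simps)
qed

lemma dcurve_I: "\<theta> < thE \<Longrightarrow> dcurve isopticI \<theta> = D \<theta>"
  by (simp add: dcurve_def vector_derivative_at I_deriv)

lemma ddcurve_I:
  assumes "\<theta> < thE"
  shows "dcurve (dcurve isopticI) \<theta> = D1 \<theta>"
proof -
  have "(dcurve isopticI has_vector_derivative D1 \<theta>) (at \<theta>)"
    by (rule has_vector_derivative_transform_within_open[OF D_deriv[OF assms], of "{..<thE}"])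
       (use assms dcurve_I in auto)
  then show ?thesis unfolding dcurve_def[of "dcurve isopticI"] by (simp add: vector_derivative_at)
qed

definition Pc :: "nat \<Rightarrow> nat \<Rightarrow> real \<Rightarrow> complex" where "Pc j k \<theta> = cnj (G j \<theta>) * G k \<theta>"
definition "pp \<theta> = Re (Pc 0 0 \<theta>)"
definition "qq \<theta> = Im (Pc 0 1 \<theta>)"
definition "pp1 \<theta> = Re (Pc 1 0 \<theta> + Pc 0 1 \<theta>)"
definition "qq1 \<theta> = Im (Pc 1 1 \<theta> + Pc 0 2 \<theta>)"
definition "pp2 \<theta> = Re ((Pc 2 0 \<theta> + Pc 1 1 \<theta>) + (Pc 1 1 \<theta> + Pc 0 2 \<theta>))"
definition "qq2 \<theta> = Im ((Pc 2 1 \<theta> + Pc 1 2 \<theta>) + (Pc 1 2 \<theta> + Pc 0 3 \<theta>))"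
definition "Gq \<theta> = pp \<theta> + qq \<theta>"
definition "Gq1 \<theta> = pp1 \<theta> + qq1 \<theta>"
definition "Gq2 \<theta> = pp2 \<theta> + qq2 \<theta>"
definition "Lf \<theta> = 3/2 * (pp1 \<theta> / pp \<theta>) - Gq1 \<theta> / Gq \<theta>"
definition "Lf1 \<theta> = 3/2 * (pp2 \<theta> / pp \<theta> - (pp1 \<theta> / pp \<theta>)^2) - (Gq2 \<theta> / Gq \<theta> - (Gq1 \<theta> / Gq \<theta>)^2)"
definition "Sf \<theta> = sqrt (pp \<theta>) / sin isoDelta"
definition "Rf \<theta> = sqrt (pp \<theta> ^ 3 / Gq \<theta> ^ 2) / sin isoDelta"

lemma pp_eq: "pp \<theta> = (cmod (G 0 \<theta>))^2"
  unfolding pp_def Pc_def cmod_power2 by (simp add: power2_eq_square)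

lemma pp_nonneg: "pp \<theta> \<ge> 0" by (simp add: pp_eq)

lemma speed_I: "\<theta> < thE \<Longrightarrow> speed isopticI \<theta> = Sf \<theta>"
  using sin_dl_pos
  by (simp add: speed_def dcurve_I D_def Sf_def pp_eq norm_mult norm_divide)

lemma cross_I:
  assumes "\<theta> < thE"
  shows "Im (cnj (dcurve isopticI \<theta>) * dcurve (dcurve isopticI) \<theta>) = Gq \<theta> / (sin isoDelta)^2"
proof -
  have c: "cnj (cis \<theta>) * cis \<theta> = 1" by (simp add: cis_cnj cis_mult)
  have "cnj (D \<theta>) * D1 \<theta> = (cnj (cis \<theta>) * cis \<theta>) * (cnj (G 0 \<theta>) * (\<i> * G 0 \<theta> + G 1 \<theta>)) / of_real ((sin isoDelta)^2)"
    by (simp add: D_def D1_def power2_eq_square)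
  also have "\<dots> = (cnj (G 0 \<theta>) * (\<i> * G 0 \<theta> + G 1 \<theta>)) / of_real ((sin isoDelta)^2)"
    by (simp add: c)
  finally show ?thesis
    by (simp add: dcurve_I ddcurve_I assms Gq_def pp_def qq_def Pc_def algebra_simps Im_divide_of_real)
qed

lemma aux_div: "(s::real) > 0 \<Longrightarrow> (a/s)^3 / \<bar>g / s^2\<bar> = a^3 / \<bar>g\<bar> / s"
  by (cases "g = 0") (simp_all add: abs_divide power_divide field_simps power3_eq_cube power2_eq_square)

lemma radius_I:
  assumes "\<theta> < thE"
  shows "radius_curv isopticI \<theta> = Rf \<theta>"
proof -
  have s: "sin isoDelta > 0" using sin_dl_pos by simp
  have "radius_curv isopticI \<theta> = (sqrt (pp \<theta>) / sin isoDelta)^3 / \<bar>Gq \<theta> / (sin isoDelta)^2\<bar>"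
    unfolding radius_curv_def speed_I[OF assms] cross_I[OF assms] Sf_def ..
  also have "\<dots> = sqrt (pp \<theta>)^3 / \<bar>Gq \<theta>\<bar> / sin isoDelta"
    using s by (rule aux_div)
  also have "\<dots> = Rf \<theta>"
  proof -
    have "sqrt (pp \<theta> ^ 3 / Gq \<theta> ^ 2) = sqrt (pp \<theta> ^ 3) / sqrt (Gq \<theta> ^2)" by (rule real_sqrt_divide)
    also have "\<dots> = sqrt (pp \<theta>)^3 / \<bar>Gq \<theta>\<bar>" by (subst real_sqrt_abs) (subst real_sqrt_power, rule refl)
    finally show ?thesis by (simp add: Rf_def)
  qed
  finally show ?thesis .
qed



lemma Pc_deriv:
  assumes "\<theta> < thE"
  shows "(Pc j k has_vector_derivative Pc (Suc j) k \<theta> + Pc j (Suc k) \<theta>) (at \<theta>)"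
proof -
  have "(Pc j k has_vector_derivative cnj (G j \<theta>) * G (Suc k) \<theta> + cnj (G (Suc j) \<theta>) * G k \<theta>) (at \<theta>)"
    unfolding Pc_def [abs_def]
    by (intro has_vector_derivative_mult has_vector_derivative_cnj G_deriv assms)
  then show ?thesis by (simp add: Pc_def add.commute)
qed

lemma pp_deriv: "\<theta> < thE \<Longrightarrow> (pp has_real_derivative pp1 \<theta>) (at \<theta>)"
  unfolding pp_def [abs_def] pp1_def
  using Re_deriv[OF Pc_deriv[of \<theta> 0 0]] by simp

lemma qq_deriv: "\<theta> < thE \<Longrightarrow> (qq has_real_derivative qq1 \<theta>) (at \<theta>)"
  unfolding qq_def [abs_def] qq1_def
  using Im_deriv[OF Pc_deriv[of \<theta> 0 1]] by (simp add: eval_nat_numeral)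

lemma pp1_deriv: "\<theta> < thE \<Longrightarrow> (pp1 has_real_derivative pp2 \<theta>) (at \<theta>)"
  unfolding pp1_def [abs_def] pp2_def
  using Re_deriv[OF has_vector_derivative_add[OF Pc_deriv[of \<theta> 1 0] Pc_deriv[of \<theta> 0 1]]]
  by (simp add: eval_nat_numeral)

lemma qq1_deriv: "\<theta> < thE \<Longrightarrow> (qq1 has_real_derivative qq2 \<theta>) (at \<theta>)"
  unfolding qq1_def [abs_def] qq2_def
  using Im_deriv[OF has_vector_derivative_add[OF Pc_deriv[of \<theta> 1 1] Pc_deriv[of \<theta> 0 2]]]
  by (simp add: eval_nat_numeral)

lemma Gq_deriv: "\<theta> < thE \<Longrightarrow> (Gq has_real_derivative Gq1 \<theta>) (at \<theta>)"
  unfolding Gq_def [abs_def] Gq1_def by (intro DERIV_add pp_deriv qq_deriv)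

lemma Gq1_deriv: "\<theta> < thE \<Longrightarrow> (Gq1 has_real_derivative Gq2 \<theta>) (at \<theta>)"
  unfolding Gq1_def [abs_def] Gq2_def by (intro DERIV_add pp1_deriv qq1_deriv)

lemma Lf_deriv:
  assumes "\<theta> < thE" "pp \<theta> \<noteq> 0" "Gq \<theta> \<noteq> 0"
  shows "(Lf has_real_derivative Lf1 \<theta>) (at \<theta>)"
proof -
  have "(Lf has_real_derivative 3/2 * ((pp2 \<theta> * pp \<theta> - pp1 \<theta> * pp1 \<theta>) / (pp \<theta> * pp \<theta>))
      - (Gq2 \<theta> * Gq \<theta> - Gq1 \<theta> * Gq1 \<theta>) / (Gq \<theta> * Gq \<theta>)) (at \<theta>)"
    unfolding Lf_def [abs_def]
    by (intro DERIV_diff DERIV_cmult DERIV_divide pp_deriv pp1_deriv Gq_deriv Gq1_deriv assms)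
  moreover have "3/2 * ((pp2 \<theta> * pp \<theta> - pp1 \<theta> * pp1 \<theta>) / (pp \<theta> * pp \<theta>))
      - (Gq2 \<theta> * Gq \<theta> - Gq1 \<theta> * Gq1 \<theta>) / (Gq \<theta> * Gq \<theta>) = Lf1 \<theta>"
    using assms by (simp add: Lf1_def field_simps power2_eq_square)
  ultimately show ?thesis by simp
qed

lemma Rf_pos: "pp \<theta> > 0 \<Longrightarrow> Gq \<theta> \<noteq> 0 \<Longrightarrow> Rf \<theta> > 0"
  using sin_dl_pos by (simp add: Rf_def)

lemma Rf_deriv:
  assumes "\<theta> < thE" "pp \<theta> > 0" "Gq \<theta> \<noteq> 0"
  shows "(Rf has_real_derivative Rf \<theta> * Lf \<theta>) (at \<theta>)"
proof -
  define K where "K = pp \<theta> ^ 3 / Gq \<theta> ^ 2"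
  define K1 where "K1 = (real 3 * (pp1 \<theta> * pp \<theta> ^ (3 - Suc 0)) * Gq \<theta> ^ 2 - pp \<theta> ^ 3 * (real 2 * (Gq1 \<theta> * Gq \<theta> ^ (2 - Suc 0)))) / (Gq \<theta> ^ 2 * Gq \<theta> ^ 2)"
  have Kpos: "K > 0" using assms by (simp add: K_def)
  have dK: "((\<lambda>\<theta>. pp \<theta> ^ 3 / Gq \<theta> ^ 2) has_real_derivative K1) (at \<theta>)"
    unfolding K1_def
    by (intro DERIV_divide DERIV_power pp_deriv Gq_deriv assms) (use assms in simp)
  have dS: "((\<lambda>\<theta>. sqrt (pp \<theta>^3 / Gq \<theta>^2)) has_real_derivative inverse (sqrt K) / 2 * K1) (at \<theta>)"
    using DERIV_chain2[OF DERIV_real_sqrt[OF Kpos[unfolded K_def]] dK] by (simp add: K_def)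
  have "(Rf has_real_derivative inverse (sqrt K) / 2 * K1 / sin isoDelta) (at \<theta>)"
    unfolding Rf_def [abs_def] by (rule DERIV_cdivide[OF dS])
  moreover have "inverse (sqrt K) / 2 * K1 / sin isoDelta = Rf \<theta> * Lf \<theta>"
  proof -
    have sK: "sqrt K * sqrt K = K" using Kpos by simp
    have sK0: "sqrt K > 0" using Kpos by simp
    have "inverse (sqrt K) / 2 * K1 = sqrt K * (K1 / (2 * K))"
      using sK sK0 by (simp add: field_simps)
    also have "K1 / (2 * K) = Lf \<theta>"
      using assms by (simp add: K1_def K_def Lf_def Gq_def [symmetric] field_simps power2_eq_square power3_eq_cube)
    finally show ?thesis by (simp add: Rf_def K_def)
  qed
  ultimately show ?thesis by simp
qed

lemma deriv_R:
  assumes "\<theta> < thE" "pp \<theta> > 0" "Gq \<theta> \<noteq> 0"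
  shows "deriv (radius_curv isopticI) \<theta> = Rf \<theta> * Lf \<theta>"
proof -
  have "(radius_curv isopticI has_real_derivative Rf \<theta> * Lf \<theta>) (at \<theta>)"
    by (rule has_field_derivative_transform_within_open[OF Rf_deriv[OF assms], of "{..<thE}"])
       (use assms radius_I in auto)
  then show ?thesis by (rule DERIV_imp_deriv)
qed

lemma lcgx: "\<theta> < thE \<Longrightarrow> lcg_x isopticI \<theta> = ln (Rf \<theta>)"
  by (simp add: lcg_x_def radius_I)

lemma lcgy:
  assumes "\<theta> < thE" "pp \<theta> > 0" "Gq \<theta> \<noteq> 0"
  shows "lcg_y isopticI \<theta> = ln (Sf \<theta> / \<bar>Lf \<theta>\<bar>)"
proof -
  have R: "Rf \<theta> > 0" using Rf_pos assms by auto
  have S: "Sf \<theta> \<ge> 0" using sin_dl_pos pp_nonneg[of \<theta>] by (auto simp: Sf_def intro!: divide_nonneg_pos)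
  have "Rf \<theta> * \<bar>Sf \<theta> / (Rf \<theta> * Lf \<theta>)\<bar> = Sf \<theta> / \<bar>Lf \<theta>\<bar>"
    using R S by (cases "Lf \<theta> = 0") (simp_all add: abs_divide abs_mult)
  then show ?thesis
    by (simp add: lcg_y_def radius_I assms speed_I deriv_R)
qed



section \<open>Asymptotics at minus infinity\<close>

definition hh :: "real \<Rightarrow> real" where "hh \<theta> = 1 / (1 - 2*\<theta>)"
definition mm :: "real \<Rightarrow> real" where "mm \<theta> = (rho \<theta>)^2"
definition ff :: "nat \<Rightarrow> real \<Rightarrow> complex" where "ff k \<theta> = G k \<theta> / of_real (rk k \<theta>)"
definition w :: "nat \<Rightarrow> nat \<Rightarrow> real \<Rightarrow> complex" where "w j k \<theta> = cnj (ff j \<theta>) * ff k \<theta>"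

lemma ck2: "ck 2 = 3" by (simp add: eval_nat_numeral)
lemma ck3: "ck 3 = 15" by (simp add: eval_nat_numeral)

lemma rk_hh: "rk k \<theta> = ck k * rho \<theta> * hh \<theta> ^ k"
  by (simp add: rk_def hh_def power_one_over)

lemma Pc_norm:
  assumes "\<theta> < 1/2"
  shows "Pc j k \<theta> = of_real (ck j * ck k * mm \<theta> * hh \<theta> ^ (j+k)) * w j k \<theta>"
proof -
  have "rk j \<theta> > 0" "rk k \<theta> > 0" using rk_pos assms by auto
  then have "G j \<theta> = of_real (rk j \<theta>) * ff j \<theta>" "G k \<theta> = of_real (rk k \<theta>) * ff k \<theta>"
    by (simp_all add: ff_def)
  then have "Pc j k \<theta> = of_real (rk j \<theta> * rk k \<theta>) * w j k \<theta>"
    by (simp add: Pc_def w_def)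
  also have "rk j \<theta> * rk k \<theta> = ck j * ck k * mm \<theta> * hh \<theta> ^ (j+k)"
    by (simp add: rk_hh mm_def power_add power2_eq_square)
  finally show ?thesis .
qed

definition X1 :: "real \<Rightarrow> real" where "X1 \<theta> = Re (w 1 0 \<theta> + w 0 1 \<theta>) / Re (w 0 0 \<theta>)"
definition den :: "real \<Rightarrow> real" where "den \<theta> = Re (w 0 0 \<theta>) + hh \<theta> * Im (w 0 1 \<theta>)"
definition X2 :: "real \<Rightarrow> real" where "X2 \<theta> = (Re (w 1 0 \<theta> + w 0 1 \<theta>) + hh \<theta> * Im (w 1 1 \<theta> + 3 * w 0 2 \<theta>)) / den \<theta>"
definition X3 :: "real \<Rightarrow> real" where "X3 \<theta> = Re (3 * w 2 0 \<theta> + w 1 1 \<theta> + (w 1 1 \<theta> + 3 * w 0 2 \<theta>)) / Re (w 0 0 \<theta>)"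
definition X4 :: "real \<Rightarrow> real" where "X4 \<theta> = (Re (3 * w 2 0 \<theta> + w 1 1 \<theta> + (w 1 1 \<theta> + 3 * w 0 2 \<theta>))
    + hh \<theta> * Im (3 * w 2 1 \<theta> + 3 * w 1 2 \<theta> + (3 * w 1 2 \<theta> + 15 * w 0 3 \<theta>))) / den \<theta>"

lemma Re_ofr: "Re (of_real c * z) = c * Re z" and Im_ofr: "Im (of_real c * z) = c * Im z"
  by simp_all

lemma norm_forms:
  assumes "\<theta> < 1/2"
  shows "pp \<theta> = mm \<theta> * Re (w 0 0 \<theta>)"
    and "pp1 \<theta> = mm \<theta> * hh \<theta> * Re (w 1 0 \<theta> + w 0 1 \<theta>)"
    and "Gq \<theta> = mm \<theta> * den \<theta>"
    and "Gq1 \<theta> = mm \<theta> * hh \<theta> * (Re (w 1 0 \<theta> + w 0 1 \<theta>) + hh \<theta> * Im (w 1 1 \<theta> + 3 * w 0 2 \<theta>))"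
    and "pp2 \<theta> = mm \<theta> * hh \<theta>^2 * Re (3 * w 2 0 \<theta> + w 1 1 \<theta> + (w 1 1 \<theta> + 3 * w 0 2 \<theta>))"
    and "Gq2 \<theta> = mm \<theta> * hh \<theta>^2 * (Re (3 * w 2 0 \<theta> + w 1 1 \<theta> + (w 1 1 \<theta> + 3 * w 0 2 \<theta>))
           + hh \<theta> * Im (3 * w 2 1 \<theta> + 3 * w 1 2 \<theta> + (3 * w 1 2 \<theta> + 15 * w 0 3 \<theta>)))"
  using assms
  by (simp_all add: pp_def pp1_def pp2_def qq_def qq1_def qq2_def Gq_def Gq1_def Gq2_def den_def
        Pc_norm ck2 ck3 Re_ofr Im_ofr algebra_simps power2_eq_square power3_eq_cube eval_nat_numeral)

lemma hh_lim: "(hh \<longlongrightarrow> 0) at_bot"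
  unfolding hh_def [abs_def] by real_asymp

lemma w_lim: "((\<lambda>\<theta>. w j k \<theta>) \<longlongrightarrow> 3) at_bot"
proof -
  have "((\<lambda>\<theta>. cnj (ff j \<theta>) * ff k \<theta>) \<longlongrightarrow> cnj aa * aa) at_bot"
    unfolding ff_def by (intro tendsto_intros f_lim)
  then show ?thesis by (simp add: w_def cnj_aa_aa)
qed

lemma X_lims:
  shows "(X1 \<longlongrightarrow> 2) at_bot" "(den \<longlongrightarrow> 3) at_bot" "(X2 \<longlongrightarrow> 2) at_bot"
    "(X3 \<longlongrightarrow> 8) at_bot" "(X4 \<longlongrightarrow> 8) at_bot"
proof -
  note wl = w_lim tendsto_Re[OF w_lim] tendsto_Im[OF w_lim]
  have d: "(den \<longlongrightarrow> Re 3 + 0 * Im 3) at_bot"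
    unfolding den_def [abs_def] by (intro tendsto_intros wl hh_lim)
  then show "(den \<longlongrightarrow> 3) at_bot" by simp
  have "(X1 \<longlongrightarrow> Re (3 + 3) / Re 3) at_bot"
    unfolding X1_def [abs_def] by (intro tendsto_intros wl) auto
  then show "(X1 \<longlongrightarrow> 2) at_bot" by simp
  have "(X2 \<longlongrightarrow> (Re (3 + 3) + 0 * Im (3 + 3 * 3)) / 3) at_bot"
    unfolding X2_def [abs_def] using d by (intro tendsto_intros wl hh_lim) auto
  then show "(X2 \<longlongrightarrow> 2) at_bot" by simp
  have "(X3 \<longlongrightarrow> Re (3 * 3 + 3 + (3 + 3 * 3)) / Re 3) at_bot"
    unfolding X3_def [abs_def] by (intro tendsto_intros wl) auto
  then show "(X3 \<longlongrightarrow> 8) at_bot" by simp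
  have "(X4 \<longlongrightarrow> (Re (3 * 3 + 3 + (3 + 3 * 3)) + 0 * Im (3 * 3 + 3 * 3 + (3 * 3 + 15 * 3))) / 3) at_bot"
    unfolding X4_def [abs_def] using d by (intro tendsto_intros wl hh_lim) auto
  then show "(X4 \<longlongrightarrow> 8) at_bot" by simp
qed



definition ell :: "real \<Rightarrow> real" where "ell \<theta> = 3/2 * X1 \<theta> - X2 \<theta>"
definition ell2 :: "real \<Rightarrow> real" where "ell2 \<theta> = 3/2 * (X3 \<theta> - X1 \<theta>^2) - (X4 \<theta> - X2 \<theta>^2)"
definition Qf :: "real \<Rightarrow> real" where "Qf \<theta> = (pp1 \<theta> / (2 * pp \<theta>) - Lf1 \<theta> / Lf \<theta>) / Lf \<theta>"

lemma mm_pos: "\<theta> < 1/2 \<Longrightarrow> mm \<theta> > 0" using rho_pos[of \<theta>] by (simp add: mm_def)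
lemma hh_pos: "\<theta> < 1/2 \<Longrightarrow> hh \<theta> > 0" by (simp add: hh_def)

lemma ratios:
  assumes "\<theta> < 1/2" "Re (w 0 0 \<theta>) \<noteq> 0" "den \<theta> \<noteq> 0"
  shows "pp1 \<theta> / pp \<theta> = hh \<theta> * X1 \<theta>" "Gq1 \<theta> / Gq \<theta> = hh \<theta> * X2 \<theta>"
    "pp2 \<theta> / pp \<theta> = hh \<theta>^2 * X3 \<theta>" "Gq2 \<theta> / Gq \<theta> = hh \<theta>^2 * X4 \<theta>"
  using assms mm_pos[OF assms(1)]
  by (simp_all add: norm_forms X1_def X2_def X3_def X4_def)

lemma Lf_ell:
  assumes "\<theta> < 1/2" "Re (w 0 0 \<theta>) \<noteq> 0" "den \<theta> \<noteq> 0"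
  shows "Lf \<theta> = hh \<theta> * ell \<theta>" "Lf1 \<theta> = hh \<theta>^2 * ell2 \<theta>"
  using ratios[OF assms]
  by (simp_all add: Lf_def Lf1_def ell_def ell2_def algebra_simps power2_eq_square)

lemma Qf_eq:
  assumes "\<theta> < 1/2" "Re (w 0 0 \<theta>) \<noteq> 0" "den \<theta> \<noteq> 0" "ell \<theta> \<noteq> 0"
  shows "Qf \<theta> = (X1 \<theta> / 2 - ell2 \<theta> / ell \<theta>) / ell \<theta>"
proof -
  have h: "hh \<theta> > 0" using hh_pos assms by auto
  have e: "pp1 \<theta> / (2 * pp \<theta>) = (pp1 \<theta> / pp \<theta>) / 2" by simp
  have "Qf \<theta> = (hh \<theta> * X1 \<theta> / 2 - hh \<theta>^2 * ell2 \<theta> / (hh \<theta> * ell \<theta>)) / (hh \<theta> * ell \<theta>)"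
    unfolding Qf_def e ratios(1)[OF assms(1-3)] Lf_ell[OF assms(1-3)] ..
  also have "hh \<theta>^2 * ell2 \<theta> / (hh \<theta> * ell \<theta>) = hh \<theta> * (ell2 \<theta> / ell \<theta>)"
    using h by (simp add: power2_eq_square)
  also have "hh \<theta> * X1 \<theta> / 2 - hh \<theta> * (ell2 \<theta> / ell \<theta>) = hh \<theta> * (X1 \<theta> / 2 - ell2 \<theta> / ell \<theta>)"
    by (simp add: algebra_simps)
  also have "hh \<theta> * (X1 \<theta> / 2 - ell2 \<theta> / ell \<theta>) / (hh \<theta> * ell \<theta>) = (X1 \<theta> / 2 - ell2 \<theta> / ell \<theta>) / ell \<theta>"
    using h by simp
  finally show ?thesis .
qed

lemma ell_lims: "(ell \<longlongrightarrow> 1) at_bot" "(ell2 \<longlongrightarrow> 2) at_bot"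
proof -
  have "(ell \<longlongrightarrow> 3/2 * 2 - 2) at_bot"
    unfolding ell_def [abs_def] by (intro tendsto_intros X_lims)
  then show "(ell \<longlongrightarrow> 1) at_bot" by simp
  have "(ell2 \<longlongrightarrow> 3/2 * (8 - 2^2) - (8 - 2^2)) at_bot"
    unfolding ell2_def [abs_def] by (intro tendsto_intros X_lims)
  then show "(ell2 \<longlongrightarrow> 2) at_bot" by simp
qed

lemma ev_good0: "eventually (\<lambda>\<theta>. \<theta> < thE \<and> Re (w 0 0 \<theta>) > 0 \<and> den \<theta> > 0 \<and> ell \<theta> > 0) at_bot"
proof -
  have e1: "eventually (\<lambda>\<theta>. \<theta> < thE) at_bot"
    by (rule eventually_at_bot_linorderI[of "thE - 1"]) auto
  have e2: "eventually (\<lambda>\<theta>. Re (w 0 0 \<theta>) > 0) at_bot"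
    using order_tendstoD(1)[OF tendsto_Re[OF w_lim[of 0 0]], of 0] by simp
  have e3: "eventually (\<lambda>\<theta>. den \<theta> > 0) at_bot"
    using order_tendstoD(1)[OF X_lims(2), of 0] by simp
  have e4: "eventually (\<lambda>\<theta>. ell \<theta> > 0) at_bot"
    using order_tendstoD(1)[OF ell_lims(1), of 0] by simp
  show ?thesis using e1 e2 e3 e4 by eventually_elim auto
qed

definition good :: "real \<Rightarrow> bool" where
  "good \<theta> \<longleftrightarrow> \<theta> < thE \<and> pp \<theta> > 0 \<and> Gq \<theta> > 0 \<and> Lf \<theta> > 0"

lemma ev_good: "eventually good at_bot"
  using ev_good0
proof eventually_elim
  case (elim \<theta>)
  then have t: "\<theta> < 1/2" using thE_lt by auto
  show ?case using elim mm_pos[OF t] hh_pos[OF t]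
    by (simp add: good_def norm_forms[OF t] Lf_ell[OF t])
qed

lemma Qf_lim: "(Qf \<longlongrightarrow> -1) at_bot"
proof -
  have "((\<lambda>\<theta>. (X1 \<theta> / 2 - ell2 \<theta> / ell \<theta>) / ell \<theta>) \<longlongrightarrow> (2/2 - 2/1)/1) at_bot"
    by (intro tendsto_intros X_lims ell_lims) auto
  then have "((\<lambda>\<theta>. (X1 \<theta> / 2 - ell2 \<theta> / ell \<theta>) / ell \<theta>) \<longlongrightarrow> -1) at_bot" by simp
  then show ?thesis
  proof (rule Lim_transform_eventually)
    show "\<forall>\<^sub>F x in at_bot. (X1 x / 2 - ell2 x / ell x) / ell x = Qf x"
      using ev_good0 by eventually_elim (use thE_lt in \<open>auto simp: Qf_eq\<close>)
  qed
qed

definition xs :: "real \<Rightarrow> real" where "xs \<theta> = ln (Rf \<theta>)"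
definition ys :: "real \<Rightarrow> real" where "ys \<theta> = ln (pp \<theta>) / 2 - ln (sin isoDelta) - ln (Lf \<theta>)"

lemma xs_deriv: "good \<theta> \<Longrightarrow> (xs has_real_derivative Lf \<theta>) (at \<theta>)"
proof -
  assume g: "good \<theta>"
  then have R: "Rf \<theta> > 0" using Rf_pos by (auto simp: good_def)
  have "(xs has_real_derivative 1 / Rf \<theta> * (Rf \<theta> * Lf \<theta>)) (at \<theta>)"
    unfolding xs_def [abs_def]
    by (rule DERIV_chain2[where f=ln, OF DERIV_ln_divide[OF R] Rf_deriv]) (use g in \<open>auto simp: good_def\<close>)
  then show ?thesis using R by simp
qed

lemma ys_deriv: "good \<theta> \<Longrightarrow> (ys has_real_derivative pp1 \<theta> / (2 * pp \<theta>) - Lf1 \<theta> / Lf \<theta>) (at \<theta>)"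
proof -
  assume g: "good \<theta>"
  then have a: "\<theta> < thE" "pp \<theta> > 0" "Gq \<theta> > 0" "Lf \<theta> > 0" by (auto simp: good_def)
  have "(ys has_real_derivative (1 / pp \<theta> * pp1 \<theta>) / 2 - 0 - 1 / Lf \<theta> * Lf1 \<theta>) (at \<theta>)"
    unfolding ys_def [abs_def]
    by (intro DERIV_diff DERIV_cdivide DERIV_const
        DERIV_chain2[where f=ln, OF DERIV_ln_divide[OF a(2)] pp_deriv[OF a(1)]]
        DERIV_chain2[where f=ln, OF DERIV_ln_divide[OF a(4)] Lf_deriv]) (use a in auto)
  then show ?thesis by (simp add: mult.commute)
qed

lemma lcg_good:
  assumes "good \<theta>"
  shows "lcg_x isopticI \<theta> = xs \<theta>" "lcg_y isopticI \<theta> = ys \<theta>"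
proof -
  have a: "\<theta> < thE" "pp \<theta> > 0" "Gq \<theta> > 0" "Lf \<theta> > 0" using assms by (auto simp: good_def)
  show "lcg_x isopticI \<theta> = xs \<theta>" by (simp add: lcgx a xs_def)
  have s: "sin isoDelta > 0" using sin_dl_pos .
  have "lcg_y isopticI \<theta> = ln (Sf \<theta> / \<bar>Lf \<theta>\<bar>)" using lcgy a by simp
  also have "\<dots> = ln (sqrt (pp \<theta>)) - ln (sin isoDelta) - ln (Lf \<theta>)"
    using a s by (simp add: Sf_def ln_div ln_mult)
  also have "\<dots> = ys \<theta>" using a by (simp add: ys_def ln_sqrt)
  finally show "lcg_y isopticI \<theta> = ys \<theta>" .
qed



abbreviation ratio :: "real \<Rightarrow> real" where
  "ratio \<theta> \<equiv> (lcg_y isopticI \<theta> - lcg_y isopticI (\<theta> - pi)) / (lcg_x isopticI \<theta> - lcg_x isopticI (\<theta> - pi))"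

lemma part2: "(ratio \<longlongrightarrow> -1) at_bot"
proof -
  obtain M0 where M0: "\<And>\<theta>. \<theta> \<le> M0 \<Longrightarrow> good \<theta>"
    using ev_good by (auto simp: eventually_at_bot_linorder)
  have key: "\<exists>c. c \<le> \<theta> \<and> ratio \<theta> = Qf c" if th: "\<theta> \<le> M0" for \<theta>
  proof -
    define a where "a = \<theta> - pi"
    have ab: "a < \<theta>" using pi_gt_zero by (simp add: a_def)
    have gd: "good x" if "a \<le> x" "x \<le> \<theta>" for x using M0 that th by auto
    have "\<exists>c. a < c \<and> c < \<theta> \<and> (xs \<theta> - xs a) * (pp1 c / (2 * pp c) - Lf1 c / Lf c) = (ys \<theta> - ys a) * Lf c"
    proof (rule GMVT'[OF ab])
      fix z assume "a \<le> z" "z \<le> \<theta>"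
      then have g: "good z" using gd by auto
      show "isCont xs z" by (rule DERIV_isCont[OF xs_deriv[OF g]])
      show "isCont ys z" by (rule DERIV_isCont[OF ys_deriv[OF g]])
    next
      fix z assume "a < z" "z < \<theta>"
      then have g: "good z" using gd by auto
      show "(xs has_real_derivative Lf z) (at z)" by (rule xs_deriv[OF g])
      show "(ys has_real_derivative pp1 z / (2 * pp z) - Lf1 z / Lf z) (at z)" by (rule ys_deriv[OF g])
    qed
    then obtain c where c: "a < c" "c < \<theta>"
      "(xs \<theta> - xs a) * (pp1 c / (2 * pp c) - Lf1 c / Lf c) = (ys \<theta> - ys a) * Lf c" by blast
    obtain z where z: "a < z" "z < \<theta>" "xs \<theta> - xs a = (\<theta> - a) * Lf z"
      using MVT2[OF ab, of xs Lf] gd xs_deriv by force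
    have "Lf z > 0" using gd[of z] z by (auto simp: good_def)
    then have X: "xs \<theta> - xs a > 0" using z ab by simp
    have L: "Lf c > 0" using gd[of c] c by (auto simp: good_def)
    have "ratio \<theta> = (ys \<theta> - ys a) / (xs \<theta> - xs a)"
      using lcg_good gd[of \<theta>] gd[of a] ab by (simp add: a_def)
    also have "\<dots> = Qf c" using X L c(3) by (simp add: Qf_def field_simps)
    finally have "ratio \<theta> = Qf c" .
    then show ?thesis using c(2) by (intro exI[of _ c]) auto
  qed
  show ?thesis unfolding tendsto_iff
  proof (intro allI impI)
    fix e :: real assume e: "e > 0"
    from Qf_lim e obtain M1 where M1: "\<And>c. c \<le> M1 \<Longrightarrow> dist (Qf c) (-1) < e"
      by (auto simp: tendsto_iff eventually_at_bot_linorder)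
    show "eventually (\<lambda>\<theta>. dist (ratio \<theta>) (-1) < e) at_bot"
    proof (rule eventually_at_bot_linorderI[of "min M0 M1"])
      fix \<theta> :: real assume "\<theta> \<le> min M0 M1"
      then obtain c where "c \<le> \<theta>" "ratio \<theta> = Qf c" using key by auto
      then show "dist (ratio \<theta>) (-1) < e" using M1 \<open>\<theta> \<le> min M0 M1\<close> by auto
    qed
  qed
qed

lemma alpha_eq:
  assumes "\<forall>\<theta>. \<theta> < 1/2 - isoDelta \<longrightarrow> lcg_y isopticI \<theta> = \<alpha> * lcg_x isopticI \<theta> + k"
  shows "\<alpha> = -1"
proof -
  have e1: "eventually (\<lambda>\<theta>. ratio \<theta> < -1/2) at_bot"
    using order_tendstoD(2)[OF part2, of "-1/2"] by simp
  have e2: "eventually (\<lambda>\<theta>. \<theta> < thE) at_bot"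
    by (rule eventually_at_bot_linorderI[of "thE - 1"]) auto
  have ev: "eventually (\<lambda>\<theta>. ratio \<theta> = \<alpha>) at_bot"
    using e1 e2
  proof eventually_elim
    case (elim \<theta>)
    have t2: "\<theta> - pi < 1/2 - isoDelta" using elim pi_gt_zero unfolding thE_def by linarith
    have t1: "\<theta> < 1/2 - isoDelta" using elim by (simp add: thE_def)
    have r: "ratio \<theta> = \<alpha> * (lcg_x isopticI \<theta> - lcg_x isopticI (\<theta> - pi)) / (lcg_x isopticI \<theta> - lcg_x isopticI (\<theta> - pi))"
      using assms t1 t2 by (simp add: algebra_simps)
    show ?case
    proof (cases "lcg_x isopticI \<theta> - lcg_x isopticI (\<theta> - pi) = 0")
      case True then show ?thesis using elim r by simp
    next
      case False then show ?thesis using r by simp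
    qed
  qed
  have "((\<lambda>\<theta>::real. \<alpha>) \<longlongrightarrow> -1) at_bot"
    using part2 tendsto_cong[OF ev] by simp
  then show ?thesis by (simp add: tendsto_const_iff)
qed



section \<open>Behaviour near the endpoint\<close>

lemma rho_sqrt: "x < 1/2 \<Longrightarrow> rho x = 1 / sqrt (1 - 2*x)"
proof -
  assume x: "x < 1/2"
  have "rho x = (1 - 2*x) powr (- (1/2))" by (simp add: rho_def)
  also have "\<dots> = inverse ((1 - 2*x) powr (1/2))" by (rule powr_minus)
  also have "\<dots> = 1 / sqrt (1 - 2*x)"
  proof -
    have "(1-2*x) powr (1/2) = sqrt (1-2*x)" by (rule powr_half_sqrt) (use x in simp)
    then show ?thesis by (simp add: inverse_eq_divide)
  qed
  finally show ?thesis .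
qed

lemma G0_bound:
  assumes "\<theta> < thE"
  shows "cmod (G 0 \<theta>) \<le> sqrt (1 - 2*\<theta>)"
proof -
  have h: "\<theta> \<le> \<theta> + isoDelta" "\<theta> + isoDelta < 1/2" using thE_lt[OF assms] dl_pos by auto
  have ftc: "(rho has_integral ((\<lambda>\<psi>. - sqrt (1 - 2*\<psi>)) (\<theta>+isoDelta) - (\<lambda>\<psi>. - sqrt (1 - 2*\<psi>)) \<theta>)) {\<theta>..\<theta>+isoDelta}"
  proof (rule fundamental_theorem_of_calculus)
    fix x assume x: "x \<in> {\<theta>..\<theta>+isoDelta}"
    then have x2: "1 - 2*x > 0" using h by auto
    have l: "((\<lambda>\<psi>. 1 - 2*\<psi>) has_real_derivative (0 - 2*1)) (at x)"
      by (intro derivative_eq_intros) auto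
    have "((\<lambda>\<psi>. - sqrt (1 - 2*\<psi>)) has_real_derivative - (inverse (sqrt (1 - 2*x)) / 2 * (0 - 2*1))) (at x)"
      by (intro DERIV_minus l DERIV_chain2[where f=sqrt and g="\<lambda>\<psi>. 1 - 2*\<psi>", OF DERIV_real_sqrt[OF x2]])
    moreover have "- (inverse (sqrt (1 - 2*x)) / 2 * (0 - 2*1)) = rho x"
    proof -
      have r: "rho x = 1 / sqrt (1 - 2*x)" by (rule rho_sqrt) (use x2 in simp)
      show ?thesis unfolding r by (simp add: inverse_eq_divide)
    qed
    ultimately have "((\<lambda>\<psi>. - sqrt (1 - 2*\<psi>)) has_real_derivative rho x) (at x)" by simp
    then have "((\<lambda>\<psi>. - sqrt (1 - 2*\<psi>)) has_vector_derivative rho x) (at x)"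
      unfolding has_real_derivative_iff_has_vector_derivative .
    then show "((\<lambda>\<psi>. - sqrt (1 - 2*\<psi>)) has_vector_derivative rho x) (at x within {\<theta>..\<theta> + isoDelta})"
      by (rule has_vector_derivative_at_within)
  qed (use h in auto)
  have "cmod (G 0 \<theta>) \<le> integral {\<theta>..\<theta>+isoDelta} rho"
    unfolding G_def
  proof (rule Henstock_Kurzweil_Integration.integral_norm_bound_integral)
    show "gk 0 \<theta> integrable_on {\<theta>..\<theta> + isoDelta}" using gk_has_int[OF assms] by blast
    show "rho integrable_on {\<theta>..\<theta> + isoDelta}" using ftc by blast
    fix x assume "x \<in> {\<theta>..\<theta> + isoDelta}"
    then have "x < 1/2" using h by auto
    then show "cmod (gk 0 \<theta> x) \<le> rho x" using rho_pos[of x] by (simp add: gk_def norm_mult rk0)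
  qed
  also have "\<dots> = sqrt (1 - 2*\<theta>) - sqrt (1 - 2*(\<theta>+isoDelta))" using ftc by (simp add: integral_unique)
  also have "\<dots> \<le> sqrt (1 - 2*\<theta>)" using h by simp
  finally show ?thesis .
qed

lemma ImG0:
  assumes "\<theta> < thE"
  shows "Im (G 0 \<theta>) \<ge> 3/2 * rho \<theta>"
proof -
  have h: "\<theta> \<le> \<theta> + isoDelta" "\<theta> + isoDelta < 1/2" using thE_lt[OF assms] dl_pos by auto
  have i: "((\<lambda>\<psi>. gk 0 \<theta> \<psi> - of_real (rk 0 \<theta>) * cis (\<theta> + isoDelta - \<psi>)) has_integral (G 0 \<theta> - of_real (rk 0 \<theta>) * aa)) {\<theta>..\<theta>+isoDelta}"
    by (intro has_integral_diff has_integral_mult_right gk_has_int int_cis assms)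
  have i2: "((Im \<circ> (\<lambda>\<psi>. gk 0 \<theta> \<psi> - of_real (rk 0 \<theta>) * cis (\<theta> + isoDelta - \<psi>))) has_integral Im (G 0 \<theta> - of_real (rk 0 \<theta>) * aa)) {\<theta>..\<theta>+isoDelta}"
    by (rule has_integral_linear[OF i bounded_linear_Im])
  have "0 \<le> Im (G 0 \<theta> - of_real (rk 0 \<theta>) * aa)"
  proof (rule has_integral_nonneg[OF i2])
    fix x assume x: "x \<in> {\<theta>..\<theta>+isoDelta}"
    have m1: "rk 0 \<theta> \<le> rk 0 x" using rk_mono[of \<theta> x 0] x h by auto
    have "0 \<le> sin (\<theta> + isoDelta - x)"
      using x dl_lt pi_gt3 by (intro sin_ge_zero) (auto simp: isoDelta_def)
    moreover have "gk 0 \<theta> x - of_real (rk 0 \<theta>) * cis (\<theta> + isoDelta - x) = of_real (rk 0 x - rk 0 \<theta>) * cis (\<theta> + isoDelta - x)"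
      by (simp add: gk_def algebra_simps)
    ultimately show "0 \<le> (Im \<circ> (\<lambda>\<psi>. gk 0 \<theta> \<psi> - of_real (rk 0 \<theta>) * cis (\<theta> + isoDelta - \<psi>))) x"
      using m1 by (simp del: of_real_diff)
  qed
  moreover have "Im aa = 3/2" by (simp add: aa_def cos_dl)
  ultimately show ?thesis by (simp add: rk0)
qed

lemma Gq_alg: "Re (cnj z * z) + Im (cnj z * (\<i> * z + of_real a - of_real b * c))
   = 2 * Re (cnj z * z) - a * Im z - b * Im (cnj z * c)"
  by (simp add: algebra_simps)

lemma Gq_formula:
  assumes "\<theta> < thE"
  shows "Gq \<theta> = 2 * pp \<theta> - rho (\<theta>+isoDelta) * Im (G 0 \<theta>) - rho \<theta> * Im (cnj (G 0 \<theta>) * cis isoDelta)"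
proof -
  have "Gq \<theta> = Re (cnj (G 0 \<theta>) * G 0 \<theta>) + Im (cnj (G 0 \<theta>) * (\<i> * G 0 \<theta> + of_real (rho (\<theta>+isoDelta)) - of_real (rho \<theta>) * cis isoDelta))"
    unfolding Gq_def pp_def qq_def Pc_def using G_rec[OF assms, of 0] by (simp only: rk0 One_nat_def)
  also have "\<dots> = 2 * pp \<theta> - rho (\<theta>+isoDelta) * Im (G 0 \<theta>) - rho \<theta> * Im (cnj (G 0 \<theta>) * cis isoDelta)"
    unfolding Gq_alg pp_def Pc_def ..
  finally show ?thesis .
qed



definition "BB = sqrt (1 - 2*(thE - 1))"
definition "r0 = rho (thE - 1)"
definition "r1 = rho thE"

lemma thE_half: "thE < 1/2" using dl_pos by (simp add: thE_def)
lemma r0_pos: "r0 > 0" using rho_pos thE_half by (simp add: r0_def)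
lemma BB_pos: "BB > 0" using thE_half by (simp add: BB_def)

lemma near_end:
  assumes "thE - 1 < \<theta>" "\<theta> < thE"
  shows "cmod (G 0 \<theta>) \<le> BB" "Im (G 0 \<theta>) \<ge> 3/2 * r0" "pp \<theta> > 0" "rho \<theta> \<le> r1"
    "- Gq \<theta> \<ge> 3/2 * r0 * rho (\<theta>+isoDelta) - 2 * BB^2 - r1 * BB"
proof -
  have h: "\<theta> + isoDelta < 1/2" "\<theta> < 1/2" using thE_lt[OF assms(2)] by auto
  show a: "cmod (G 0 \<theta>) \<le> BB"
  proof -
    have "sqrt (1 - 2*\<theta>) \<le> sqrt (1 - 2*(thE - 1))" using assms(1) by (intro real_sqrt_le_mono) simp
    then show ?thesis using G0_bound[OF assms(2)] unfolding BB_def by linarith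
  qed
  have m: "r0 \<le> rho \<theta>" using rk_mono[of "thE - 1" \<theta> 0] assms h by (simp add: r0_def rk0)
  show r: "rho \<theta> \<le> r1" using rk_mono[of \<theta> thE 0] assms thE_half by (simp add: r1_def rk0)
  show im: "Im (G 0 \<theta>) \<ge> 3/2 * r0" using ImG0[OF assms(2)] m by simp
  then have "G 0 \<theta> \<noteq> 0" using r0_pos by auto
  then show ppos: "pp \<theta> > 0" by (simp add: pp_eq)
  have rr: "rho (\<theta>+isoDelta) > 0" "rho \<theta> > 0" using rho_pos h by auto
  have p: "pp \<theta> \<le> BB^2" using a by (simp add: pp_eq power_mono)
  have i1: "rho (\<theta>+isoDelta) * Im (G 0 \<theta>) \<ge> rho (\<theta>+isoDelta) * (3/2 * r0)"
    using im rr by (intro mult_left_mono) auto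
  have "\<bar>Im (cnj (G 0 \<theta>) * cis isoDelta)\<bar> \<le> cmod (cnj (G 0 \<theta>) * cis isoDelta)" by (rule abs_Im_le_cmod)
  also have "\<dots> = cmod (G 0 \<theta>)" by (simp add: norm_mult)
  finally have "\<bar>Im (cnj (G 0 \<theta>) * cis isoDelta)\<bar> \<le> BB" using a by simp
  then have "- BB \<le> Im (cnj (G 0 \<theta>) * cis isoDelta)" by linarith
  then have "rho \<theta> * (- BB) \<le> rho \<theta> * Im (cnj (G 0 \<theta>) * cis isoDelta)"
    using rr by (intro mult_left_mono) auto
  moreover have "r1 * BB \<ge> rho \<theta> * BB" using r BB_pos by (intro mult_right_mono) auto
  ultimately have i2: "- (r1 * BB) \<le> rho \<theta> * Im (cnj (G 0 \<theta>) * cis isoDelta)" by simp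
  show "- Gq \<theta> \<ge> 3/2 * r0 * rho (\<theta>+isoDelta) - 2 * BB^2 - r1 * BB"
  proof -
    have i1': "3/2 * r0 * rho (\<theta>+isoDelta) \<le> rho (\<theta>+isoDelta) * Im (G 0 \<theta>)"
      using i1 by (simp add: mult_ac)
    show ?thesis using Gq_formula[OF assms(2)] p i1' i2 by linarith
  qed
qed

lemma rho_top: "filterlim (\<lambda>\<theta>. rho (\<theta> + isoDelta)) at_top (at_left thE)"
proof -
  have d: "isoDelta > 0" using dl_pos by simp
  have "filterlim (\<lambda>x. (1-2*(x+c)) powr (-1/2)) at_top (at_left (1/2 - c))" if "c > 0" for c :: real
    using that by real_asymp
  from this[OF d] show ?thesis by (simp add: rho_def thE_def)
qed

lemma inv_Rf: "pp \<theta> > 0 \<Longrightarrow> 1 / Rf \<theta> = sin isoDelta * \<bar>Gq \<theta>\<bar> / sqrt (pp \<theta>)^3"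
proof -
  assume p: "pp \<theta> > 0"
  have "sqrt (pp \<theta> ^ 3 / Gq \<theta> ^ 2) = sqrt (pp \<theta> ^ 3) / sqrt (Gq \<theta> ^2)" by (rule real_sqrt_divide)
  also have "\<dots> = sqrt (pp \<theta>)^3 / \<bar>Gq \<theta>\<bar>" by (subst real_sqrt_abs) (subst real_sqrt_power, rule refl)
  finally have "Rf \<theta> = sqrt (pp \<theta>)^3 / \<bar>Gq \<theta>\<bar> / sin isoDelta" by (simp add: Rf_def)
  then show ?thesis by simp
qed

lemma ev_end: "eventually (\<lambda>\<theta>. thE - 1 < \<theta> \<and> \<theta> < thE \<and> rho (\<theta> + isoDelta) \<ge> T) (at_left thE)"
proof -
  have "eventually (\<lambda>\<theta>. \<theta> \<in> {thE - 1<..<thE}) (at_left thE)" by (rule eventually_at_left_real) simp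
  moreover have "eventually (\<lambda>\<theta>. rho (\<theta> + isoDelta) \<ge> T) (at_left thE)"
    using rho_top by (simp add: filterlim_at_top)
  ultimately show ?thesis by eventually_elim auto
qed

lemma u_top: "filterlim (\<lambda>\<theta>. 1 / Rf \<theta>) at_top (at_left thE)"
  unfolding filterlim_at_top
proof
  fix Z :: real
  define C where "C = 2 * BB^2 + r1 * BB"
  define T where "T = (\<bar>Z\<bar> * BB^3 / sin isoDelta + C) / (3/2 * r0)"
  show "eventually (\<lambda>\<theta>. Z \<le> 1 / Rf \<theta>) (at_left thE)"
    using ev_end[of T]
  proof eventually_elim
    case (elim \<theta>)
    note ne = near_end[of \<theta>]
    have s: "sin isoDelta > 0" using sin_dl_pos .
    have p: "pp \<theta> > 0" using ne elim by auto
    have sp: "sqrt (pp \<theta>) \<le> BB" using ne elim by (simp add: pp_eq)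
    have sp0: "sqrt (pp \<theta>) > 0" using p by simp
    have "3/2 * r0 * T \<le> 3/2 * r0 * rho (\<theta> + isoDelta)" using elim r0_pos by simp
    also have "3/2 * r0 * T = \<bar>Z\<bar> * BB^3 / sin isoDelta + C" using r0_pos by (simp add: T_def)
    finally have f: "\<bar>Z\<bar> * BB^3 / sin isoDelta + C \<le> 3/2 * r0 * rho (\<theta> + isoDelta)" .
    have ng: "- Gq \<theta> \<ge> 3/2 * r0 * rho (\<theta>+isoDelta) - 2 * BB^2 - r1 * BB" using ne(5) elim by auto
    have g: "\<bar>Z\<bar> * BB^3 / sin isoDelta \<le> \<bar>Gq \<theta>\<bar>"
      using f ng abs_ge_minus_self[of "Gq \<theta>"] unfolding C_def by linarith
    then have "\<bar>Z\<bar> * BB^3 \<le> sin isoDelta * \<bar>Gq \<theta>\<bar>" using s by (simp add: field_simps)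
    then have "\<bar>Z\<bar> * sqrt (pp \<theta>)^3 \<le> sin isoDelta * \<bar>Gq \<theta>\<bar>"
    proof -
      have "sqrt (pp \<theta>)^3 \<le> BB^3" using sp sp0 by (intro power_mono) auto
      then have "\<bar>Z\<bar> * sqrt (pp \<theta>)^3 \<le> \<bar>Z\<bar> * BB^3" by (intro mult_left_mono) auto
      then show ?thesis using \<open>\<bar>Z\<bar> * BB^3 \<le> sin isoDelta * \<bar>Gq \<theta>\<bar>\<close> by linarith
    qed
    then have "\<bar>Z\<bar> \<le> sin isoDelta * \<bar>Gq \<theta>\<bar> / sqrt (pp \<theta>)^3" using sp0 by (simp add: field_simps)
    then show ?case using inv_Rf[OF p] by simp
  qed
qed

lemma no_line_m1:
  assumes H: "\<forall>\<theta>. \<theta> < 1/2 - isoDelta \<longrightarrow> lcg_y isopticI \<theta> = -1 * lcg_x isopticI \<theta> + k"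
  shows False
proof -
  define C where "C = 2 * BB^2 + r1 * BB"
  have "eventually (\<lambda>\<theta>. thE - 1 < \<theta> \<and> \<theta> < thE \<and> rho (\<theta> + isoDelta) \<ge> (C + 1) / (3/2 * r0)) (at_left thE)"
    by (rule ev_end)
  then obtain b where b: "b < thE" "\<And>y. b < y \<Longrightarrow> y < thE \<Longrightarrow> thE - 1 < y \<and> y < thE \<and> rho (y + isoDelta) \<ge> (C + 1) / (3/2 * r0)"
    by (auto simp: eventually_at_left_field)
  have P: "thE - 1 < y \<and> pp y > 0 \<and> Gq y < 0" if "b < y" "y < thE" for y
  proof -
    have a: "thE - 1 < y" "rho (y + isoDelta) \<ge> (C + 1) / (3/2 * r0)" using b that by auto
    then have "3/2 * r0 * rho (y + isoDelta) \<ge> C + 1" using r0_pos by (simp add: field_simps)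
    then show ?thesis using near_end[OF a(1) that(2)] a by (simp add: C_def)
  qed
  have s: "sin isoDelta > 0" using sin_dl_pos .
  define C2 where "C2 = BB / sin isoDelta / exp k"
  have C2: "C2 \<ge> 0" using BB_pos s by (simp add: C2_def)
  have uder: "((\<lambda>x. 1 / Rf x) has_real_derivative - Lf y / Rf y) (at y) \<and> \<bar>- Lf y / Rf y\<bar> \<le> C2"
    if "b < y" "y < thE" for y
  proof
    have py: "thE - 1 < y" "pp y > 0" "Gq y < 0" using P that by auto
    have R: "Rf y > 0" using Rf_pos py by auto
    have "((\<lambda>x. 1 / Rf x) has_real_derivative (0 * Rf y - 1 * (Rf y * Lf y)) / (Rf y * Rf y)) (at y)"
      by (intro DERIV_divide DERIV_const Rf_deriv) (use py that R in auto)
    then show "((\<lambda>x. 1 / Rf x) has_real_derivative - Lf y / Rf y) (at y)" using R by simp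
    have Sf_le: "Sf y \<le> BB / sin isoDelta"
      using near_end(1)[OF py(1) that(2)] s by (simp add: Sf_def pp_eq divide_right_mono)
    have Sf0: "Sf y > 0" using py s by (simp add: Sf_def)
    have eq: "ln (Sf y / \<bar>Lf y\<bar>) = - ln (Rf y) + k"
      using H that lcgy[of y] lcgx[of y] py by (simp add: thE_def)
    have "\<bar>Lf y\<bar> \<le> Sf y * Rf y / exp k"
    proof (cases "Lf y = 0")
      case True then show ?thesis using Sf0 R by simp
    next
      case False
      then have "Sf y / \<bar>Lf y\<bar> > 0" using Sf0 by simp
      then have "Sf y / \<bar>Lf y\<bar> = exp (- ln (Rf y) + k)" using eq by (metis exp_ln)
      also have "\<dots> = exp k / Rf y" using R by (simp add: exp_diff)
      finally have "Sf y / \<bar>Lf y\<bar> = exp k / Rf y" .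
      then have "\<bar>Lf y\<bar> = Sf y * Rf y / exp k" using False R by (simp add: field_simps)
      then show ?thesis by simp
    qed
    then have "\<bar>Lf y\<bar> / Rf y \<le> Sf y / exp k" using R by (simp add: field_simps)
    also have "\<dots> \<le> C2" unfolding C2_def by (rule divide_right_mono[OF Sf_le]) simp
    finally show "\<bar>- Lf y / Rf y\<bar> \<le> C2" using R by (simp add: abs_divide)
  qed
  define \<theta>0 where "\<theta>0 = (b + thE) / 2"
  have t0: "b < \<theta>0" "\<theta>0 < thE" using b by (auto simp: \<theta>0_def)
  define M where "M = 1 / Rf \<theta>0 + (thE - \<theta>0) * C2"
  have bound: "1 / Rf \<theta> \<le> M" if th: "\<theta>0 < \<theta>" "\<theta> < thE" for \<theta>
  proof -
    obtain z where z: "\<theta>0 < z" "z < \<theta>" "1 / Rf \<theta> - 1 / Rf \<theta>0 = (\<theta> - \<theta>0) * (- Lf z / Rf z)"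
      using MVT2[OF th(1), of "\<lambda>x. 1 / Rf x" "\<lambda>y. - Lf y / Rf y"] uder t0 th by force
    have "\<bar>- Lf z / Rf z\<bar> \<le> C2" using uder[of z] z t0 th by auto
    then have "- Lf z / Rf z \<le> C2" by (rule abs_le_D1)
    then have "(\<theta> - \<theta>0) * (- Lf z / Rf z) \<le> (\<theta> - \<theta>0) * C2"
      using th by (intro mult_left_mono) auto
    also have "\<dots> \<le> (thE - \<theta>0) * C2" using th C2 by (intro mult_right_mono) auto
    finally show ?thesis using z by (simp add: M_def)
  qed
  have e1: "eventually (\<lambda>\<theta>. 1 / Rf \<theta> \<le> M) (at_left thE)"
    using eventually_at_left_real[OF t0(2)] by eventually_elim (use bound in auto)
  have e2: "eventually (\<lambda>\<theta>. M + 1 \<le> 1 / Rf \<theta>) (at_left thE)"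
    using u_top by (simp add: filterlim_at_top)
  have "eventually (\<lambda>\<theta>. False) (at_left thE)" using e1 e2 by eventually_elim auto
  then show False by simp
qed

theorem mainTheorem3:
  shows "\<not> (\<exists>\<alpha> k. \<forall>\<theta>. \<theta> < 1/2 - isoDelta \<longrightarrow>
              lcg_y isopticI \<theta> = \<alpha> * lcg_x isopticI \<theta> + k)
         \<and> ((\<lambda>\<theta>. (lcg_y isopticI \<theta> - lcg_y isopticI (\<theta> - pi)) /
                   (lcg_x isopticI \<theta> - lcg_x isopticI (\<theta> - pi))) \<longlongrightarrow> -1) at_bot"
proof
  show "\<not> (\<exists>\<alpha> k. \<forall>\<theta>. \<theta> < 1/2 - isoDelta \<longrightarrow> lcg_y isopticI \<theta> = \<alpha> * lcg_x isopticI \<theta> + k)"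
  proof
    assume "\<exists>\<alpha> k. \<forall>\<theta>. \<theta> < 1/2 - isoDelta \<longrightarrow> lcg_y isopticI \<theta> = \<alpha> * lcg_x isopticI \<theta> + k"
    then obtain \<alpha> k where H: "\<forall>\<theta>. \<theta> < 1/2 - isoDelta \<longrightarrow> lcg_y isopticI \<theta> = \<alpha> * lcg_x isopticI \<theta> + k"
      by blast
    have "\<alpha> = -1" using H by (rule alpha_eq)
    with H show False using no_line_m1 by blast
  qed
  show "((\<lambda>\<theta>. (lcg_y isopticI \<theta> - lcg_y isopticI (\<theta> - pi)) /
                   (lcg_x isopticI \<theta> - lcg_x isopticI (\<theta> - pi))) \<longlongrightarrow> -1) at_bot"
    by (rule part2)
qed


end
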